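(* Let $P=\sum_{k=0}^nq^kP_k(D)\in\mathbb{C}[q][D]$ with $P_k\in\mathbb{C}[D]$, where $D=q\frac{d}{dq}$. Fix $N\geq0$, let $R=\mathbb{C}[\varepsilon]/(\varepsilon^{N+1})$, and let $\{\overline{c}_i\}_{i\geq0}$ be a sequence of elements of $R$. Then $\{\overline{c}_i\}$ is a Newton solution of $P_\varepsilon$ if and only if the series $I=\sum_{i\geq0}\overline{c}_iq^i\in\mathbb{C}[[q]]\otimes R$ is a perturbed solution of $P$, where $\varepsilon$ plays the role of $h$.
   Context: Newton solution. Put $P_\varepsilon=\sum_kq^kP_k(D+\varepsilon)$. A sequence $\{\overline{c}_i\}_{i\geq 0}$ in $R$ is a Newton solution of $P_\varepsilon$ if for every $m\in\mathbb{Z}$ $$\overline{c}_mP_n(m+\varepsilon)+\overline{c}_{m+1}P_{n-1}(m+1+\varepsilon)+\cdots+\overline{c}_{m+n}P_0(m+n+\varepsilon)=0,$$ with $\overline{c}_i=0$ for $i<0$. Perturbed solution. Write $I=\sum_{j=0}^NI^j(q)\varepsilon^j$ with $I^j\in\mathbb{C}[[q]]$, and put $I_r=\sum_{m=0}^rI^{r-m}(q)\,t^m/m!\in\mathbb{C}[[q]][t]$. Here $P$ acts on $\mathbb{C}[[q]][t]$ via $D(f(q)t^m)=qf'(q)t^m+mf(q)t^{m-1}$, with $q$ acting by multiplication. Then $I$ is a perturbed solution of $P$ if $PI_r=0$ for all $0\leq r\leq N$. *)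

theory Defs
  imports "HOL-Computational_Algebra.Computational_Algebra"
begin

text \<open>Elements of R = C[eps]/(eps^(N+1)) are represented by complex polynomials in eps;
  an element is zero in R iff its coefficients of eps^0, ..., eps^N vanish.\<close>
definition zero_in_R :: "nat \<Rightarrow> complex poly \<Rightarrow> bool" where
  "zero_in_R N p \<longleftrightarrow> (\<forall>j\<le>N. coeff p j = 0)"

definition ext_seq :: "(nat \<Rightarrow> complex poly) \<Rightarrow> int \<Rightarrow> complex poly" where
  "ext_seq c i = (if i < 0 then 0 else c (nat i))"

text \<open>The operator P = sum_{k=0}^n q^k P_k(D) is given by n and Pk.
  Newton solution of P_eps: for every integer m,
  sum_{j=0}^n c_{m+j} P_{n-j}(m+j+eps) = 0 in R.\<close>
definition newton_solution ::
  "nat \<Rightarrow> (nat \<Rightarrow> complex poly) \<Rightarrow> nat \<Rightarrow> (nat \<Rightarrow> complex poly) \<Rightarrow> bool" where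
  "newton_solution n Pk N c \<longleftrightarrow>
     (\<forall>m::int. zero_in_R N
        (\<Sum>j\<le>n. ext_seq c (m + int j) * pcompose (Pk (n - j)) [:of_int (m + int j), 1:]))"

text \<open>C[[q]][t] is represented as polynomials in t with formal power series coefficients.
  D(f t^m) = q f' t^m + m f t^(m-1).\<close>
definition Dop :: "complex fps poly \<Rightarrow> complex fps poly" where
  "Dop g = map_poly (\<lambda>f. fps_X * fps_deriv f) g + pderiv g"

definition poly_D :: "complex poly \<Rightarrow> complex fps poly \<Rightarrow> complex fps poly" where
  "poly_D Q g = (\<Sum>i\<le>degree Q. smult (fps_const (coeff Q i)) ((Dop ^^ i) g))"

definition apply_P :: "nat \<Rightarrow> (nat \<Rightarrow> complex poly) \<Rightarrow> complex fps poly \<Rightarrow> complex fps poly" where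
  "apply_P n Pk g = (\<Sum>k\<le>n. smult (fps_X ^ k) (poly_D (Pk k) g))"

text \<open>I = sum_i c_i q^i = sum_j I^j(q) eps^j, so I^j(q) = sum_i (coeff of eps^j in c_i) q^i.\<close>
definition I_comp :: "(nat \<Rightarrow> complex poly) \<Rightarrow> nat \<Rightarrow> complex fps" where
  "I_comp c j = Abs_fps (\<lambda>i. coeff (c i) j)"

definition I_r :: "(nat \<Rightarrow> complex poly) \<Rightarrow> nat \<Rightarrow> complex fps poly" where
  "I_r c r = (\<Sum>m\<le>r. monom (fps_const (1 / of_nat (fact m)) * I_comp c (r - m)) m)"

definition perturbed_solution ::
  "nat \<Rightarrow> (nat \<Rightarrow> complex poly) \<Rightarrow> nat \<Rightarrow> (nat \<Rightarrow> complex poly) \<Rightarrow> bool" where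
  "perturbed_solution n Pk N c \<longleftrightarrow> (\<forall>r\<le>N. apply_P n Pk (I_r c r) = 0)"

end

theory Submission
  imports Defs
begin

definition shiftc :: "nat \<Rightarrow> (nat \<Rightarrow> complex poly) \<Rightarrow> nat \<Rightarrow> complex poly" where
  "shiftc k a i = (if k \<le> i then a (i - k) else 0)"

lemma coeff_I_r:
  "coeff (I_r a r) m = (if m \<le> r then fps_const (1 / of_nat (fact m)) * I_comp a (r - m) else 0)"
  unfolding I_r_def by (simp add: coeff_sum)

lemma I_comp_nth[simp]: "I_comp a s $ i = coeff (a i) s"
  by (simp add: I_comp_def)

lemma I_r_eqI: "(\<And>s i. s \<le> r \<Longrightarrow> coeff (a i) s = coeff (b i) s) \<Longrightarrow> I_r a r = I_r b r"
proof -
  assume h: "\<And>s i. s \<le> r \<Longrightarrow> coeff (a i) s = coeff (b i) s"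
  show ?thesis
  proof (rule poly_eqI)
    fix m
    have "m \<le> r \<Longrightarrow> I_comp a (r - m) = I_comp b (r - m)"
      by (rule fps_ext) (simp add: h)
    thus "coeff (I_r a r) m = coeff (I_r b r) m" by (simp add: coeff_I_r)
  qed
qed

lemma I_r_add: "I_r (\<lambda>i. a i + b i) r = I_r a r + I_r b r"
proof (rule poly_eqI)
  fix m
  have "I_comp (\<lambda>i. a i + b i) (r - m) = I_comp a (r - m) + I_comp b (r - m)"
    by (rule fps_ext) simp
  thus "coeff (I_r (\<lambda>i. a i + b i) r) m = coeff (I_r a r + I_r b r) m"
    by (simp add: coeff_I_r algebra_simps)
qed

lemma I_r_zero: "I_r (\<lambda>i. 0) r = 0"
proof (rule poly_eqI)
  fix m
  have "I_comp (\<lambda>i. 0) (r - m) = 0"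
    by (rule fps_ext) simp
  thus "coeff (I_r (\<lambda>i. 0) r) m = coeff 0 m"
    by (simp add: coeff_I_r)
qed

lemma I_r_sum: "finite K \<Longrightarrow> I_r (\<lambda>i. \<Sum>k\<in>K. a k i) r = (\<Sum>k\<in>K. I_r (a k) r)"
  by (induction K rule: finite_induct) (simp_all add: I_r_zero I_r_add)

lemma I_r_smult: "I_r (\<lambda>i. smult x (a i)) r = smult (fps_const x) (I_r a r)"
proof (rule poly_eqI)
  fix m
  have "I_comp (\<lambda>i. smult x (a i)) (r - m) = fps_const x * I_comp a (r - m)"
    by (rule fps_ext) simp
  thus "coeff (I_r (\<lambda>i. smult x (a i)) r) m = coeff (smult (fps_const x) (I_r a r)) m"
    by (simp add: coeff_I_r algebra_simps)
qed

lemma I_r_shift: "I_r (shiftc k a) r = smult (fps_X ^ k) (I_r a r)"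
proof (rule poly_eqI)
  fix m
  have "I_comp (shiftc k a) (r - m) = fps_X ^ k * I_comp a (r - m)"
    by (rule fps_ext) (simp add: shiftc_def fps_X_power_mult_nth)
  thus "coeff (I_r (shiftc k a) r) m = coeff (smult (fps_X ^ k) (I_r a r)) m"
    by (simp add: coeff_I_r algebra_simps)
qed

lemma coeff_mult_lin: "coeff ((p::complex poly) * [:x, 1:]) s = x * coeff p s + (if s = 0 then 0 else coeff p (s - 1))"
  proof -
  have "p * [:x, 1:] = smult x p + pCons 0 p" by (simp add: mult.commute[of p])
  then show ?thesis by (cases s) (simp_all add: algebra_simps)
qed

lemma X_deriv_nth: "(fps_X * fps_deriv f) $ i = of_nat i * f $ i"
  by (cases i) simp_all

lemma coeff_Dop: "coeff (Dop g) m = fps_X * fps_deriv (coeff g m) + of_nat (Suc m) * coeff g (Suc m)"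
  unfolding Dop_def by (simp add: coeff_map_poly coeff_pderiv)

lemma Dop_I_r: "Dop (I_r a r) = I_r (\<lambda>i. a i * [:of_nat i, 1:]) r"
proof (rule poly_eqI)
  fix m
  show "coeff (Dop (I_r a r)) m = coeff (I_r (\<lambda>i. a i * [:of_nat i, 1:]) r) m"
  proof (cases "m \<le> r")
    case False
    then show ?thesis by (simp add: coeff_Dop coeff_I_r)
  next
    case True
    have "fps_X * fps_deriv (fps_const (1 / of_nat (fact m)) * I_comp a (r - m)) +
          of_nat (Suc m) * (if Suc m \<le> r then fps_const (1 / of_nat (fact (Suc m))) * I_comp a (r - Suc m) else 0)
        = fps_const (1 / of_nat (fact m)) * I_comp (\<lambda>i. a i * [:of_nat i, 1:]) (r - m)"
    proof (rule fps_ext)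
      fix i
      have ff: "(of_nat (Suc m) :: complex) * (1 / of_nat (fact (Suc m))) = 1 / of_nat (fact m)"
        by (simp only: fact_Suc of_nat_mult) (simp add: field_simps del: of_nat_Suc)
      have ff2: "\<And>c::complex. of_nat (Suc m) * c / (fact (Suc m)) = c / fact m"
        by (simp only: fact_Suc of_nat_mult) (simp add: field_simps del: of_nat_Suc)
      have e1: "(fps_X * fps_deriv (fps_const (1 / of_nat (fact m)) * I_comp a (r - m))) $ i
           = of_nat i * (1 / of_nat (fact m) * coeff (a i) (r - m))"
        by (simp only: X_deriv_nth) simp
      have e2: "(of_nat (Suc m) * (if Suc m \<le> r then fps_const (1 / of_nat (fact (Suc m))) * I_comp a (r - Suc m) else 0)) $ i
           = (if Suc m \<le> r then 1 / of_nat (fact m) * coeff (a i) (r - Suc m) else 0)"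
        using ff2 by (simp add: fps_of_nat[symmetric] del: of_nat_Suc fact_Suc)
      show "(fps_X * fps_deriv (fps_const (1 / of_nat (fact m)) * I_comp a (r - m)) +
          of_nat (Suc m) * (if Suc m \<le> r then fps_const (1 / of_nat (fact (Suc m))) * I_comp a (r - Suc m) else 0)) $ i
        = (fps_const (1 / of_nat (fact m)) * I_comp (\<lambda>i. a i * [:of_nat i, 1:]) (r - m)) $ i"
        using True by (simp only: fps_add_nth e1 e2) (auto simp: coeff_mult_lin algebra_simps Suc_diff_Suc coeff_pCons split: nat.split; rule arg_cong[where f="coeff (a i)"]; linarith)
    qed
    then show ?thesis using True by (simp add: coeff_Dop coeff_I_r del: of_nat_Suc fact_Suc)
  qed
qed

lemma Dop_pow: "(Dop ^^ j) (I_r a r) = I_r (\<lambda>i. a i * [:of_nat i, 1:] ^ j) r"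
  by (induction j) (simp_all add: Dop_I_r mult.assoc power_commutes del: mult_pCons_right mult_pCons_left)

lemma pcompose_expand: "pcompose Q p = (\<Sum>j\<le>degree Q. smult (coeff Q j) (p ^ j))"
proof -
  have d: "degree (map_poly (\<lambda>x. [:x:]) Q) = degree Q"
    by (rule degree_map_poly) simp
  show ?thesis
    unfolding pcompose_altdef poly_altdef d by (simp add: coeff_map_poly)
qed

lemma poly_D_I_r: "poly_D Q (I_r a r) = I_r (\<lambda>i. a i * pcompose Q [:of_nat i, 1:]) r"
proof -
  have "I_r (\<lambda>i. a i * pcompose Q [:of_nat i, 1:]) r
      = I_r (\<lambda>i. \<Sum>j\<le>degree Q. smult (coeff Q j) (a i * [:of_nat i, 1:] ^ j)) r"
    by (simp add: pcompose_expand sum_distrib_left mult_smult_right)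
  also have "\<dots> = (\<Sum>j\<le>degree Q. smult (fps_const (coeff Q j)) ((Dop ^^ j) (I_r a r)))"
    by (simp add: I_r_sum I_r_smult Dop_pow)
  finally show ?thesis unfolding poly_D_def by simp
qed

definition bseq :: "nat \<Rightarrow> (nat \<Rightarrow> complex poly) \<Rightarrow> (nat \<Rightarrow> complex poly) \<Rightarrow> nat \<Rightarrow> complex poly" where
  "bseq n Pk c i = (\<Sum>k\<le>n. shiftc k (\<lambda>i. c i * pcompose (Pk k) [:of_nat i, 1:]) i)"

lemma apply_P_I_r: "apply_P n Pk (I_r c r) = I_r (bseq n Pk c) r"
  unfolding apply_P_def bseq_def
  by (simp add: I_r_sum I_r_shift poly_D_I_r)

lemma I_r_zero_iff: "I_r b r = 0 \<longleftrightarrow> (\<forall>s\<le>r. \<forall>i. coeff (b i) s = 0)"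
proof
  assume h: "I_r b r = 0"
  show "\<forall>s\<le>r. \<forall>i. coeff (b i) s = 0"
  proof (intro allI impI)
    fix s i assume s: "s \<le> r"
    have "coeff (I_r b r) (r - s) = 0" using h by simp
    hence "fps_const (1 / of_nat (fact (r - s))) * I_comp b s = 0"
      using s by (simp add: coeff_I_r)
    hence "I_comp b s = 0" by simp
    hence "I_comp b s $ i = 0" by simp
    thus "coeff (b i) s = 0" by simp
  qed
next
  assume h: "\<forall>s\<le>r. \<forall>i. coeff (b i) s = 0"
  have "I_r b r = I_r (\<lambda>i. 0) r" by (rule I_r_eqI) (simp add: h)
  thus "I_r b r = 0" by (simp add: I_r_zero)
qed

lemma newton_sum_nat:
  "(\<Sum>j\<le>n. ext_seq c ((int i - int n) + int j) * pcompose (Pk (n - j)) [:of_int ((int i - int n) + int j), 1:])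
   = bseq n Pk c i"
  unfolding bseq_def
proof (rule sum.reindex_bij_witness[of _ "\<lambda>k. n - k" "\<lambda>j. n - j"])
  fix j assume j: "j \<in> {..n}"
  define k where "k = n - j"
  have jk: "j = n - k" "k \<le> n" using j unfolding k_def by auto
  have nk: "n - j = k" unfolding k_def ..
  show "shiftc (n - j) (\<lambda>i. c i * pcompose (Pk (n - j)) [:of_nat i, 1:]) i =
        ext_seq c (int i - int n + int j) * pcompose (Pk (n - j)) [:of_int (int i - int n + int j), 1:]"
  proof (cases "k \<le> i")
    case True
    have e: "int i - int n + int j = int (i - k)" using jk True by auto
    have e2: "nat (int (i - k)) = i - k" by simp
    show ?thesis using True unfolding e by (simp add: nk shiftc_def ext_seq_def e2 del: of_nat_diff)
  next
    case False
    have e: "int i - int n + int j < 0" using jk False by auto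
    show ?thesis using False e by (simp add: nk shiftc_def ext_seq_def)
  qed
qed auto

lemma newton_iff: "newton_solution n Pk N c \<longleftrightarrow> (\<forall>i. zero_in_R N (bseq n Pk c i))"
proof
  assume h: "newton_solution n Pk N c"
  show "\<forall>i. zero_in_R N (bseq n Pk c i)"
  proof
    fix i
    from h have "zero_in_R N (\<Sum>j\<le>n. ext_seq c ((int i - int n) + int j) * pcompose (Pk (n - j)) [:of_int ((int i - int n) + int j), 1:])"
      unfolding newton_solution_def by blast
    thus "zero_in_R N (bseq n Pk c i)" by (simp only: newton_sum_nat)
  qed
next
  assume h: "\<forall>i. zero_in_R N (bseq n Pk c i)"
  show "newton_solution n Pk N c"
    unfolding newton_solution_def
  proof
    fix m :: int
    show "zero_in_R N (\<Sum>j\<le>n. ext_seq c (m + int j) * pcompose (Pk (n - j)) [:of_int (m + int j), 1:])"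
    proof (cases "m + int n \<ge> 0")
      case True
      define i where "i = nat (m + int n)"
      have mi: "m = int i - int n" using True unfolding i_def by simp
      show ?thesis unfolding mi newton_sum_nat using h by blast
    next
      case False
      have "(\<Sum>j\<le>n. ext_seq c (m + int j) * pcompose (Pk (n - j)) [:of_int (m + int j), 1:]) = 0"
        by (rule sum.neutral) (use False in \<open>auto simp: ext_seq_def\<close>)
      thus ?thesis by (simp add: zero_in_R_def)
    qed
  qed
qed

theorem proposition2p2p2:
  fixes n N :: nat and Pk :: "nat \<Rightarrow> complex poly" and c :: "nat \<Rightarrow> complex poly"
  shows "newton_solution n Pk N c \<longleftrightarrow> perturbed_solution n Pk N c"
proof -
  have "perturbed_solution n Pk N c \<longleftrightarrow> (\<forall>r\<le>N. \<forall>s\<le>r. \<forall>i. coeff (bseq n Pk c i) s = 0)"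
    unfolding perturbed_solution_def apply_P_I_r I_r_zero_iff by simp
  also have "\<dots> \<longleftrightarrow> (\<forall>i. zero_in_R N (bseq n Pk c i))"
    unfolding zero_in_R_def by (meson order_refl order_trans)
  finally show ?thesis using newton_iff by simp
qed

end
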